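(* Let $k$ be a field, $X=\mathbb P^{n_1}_k\times\cdots\times\mathbb P^{n_s}_k$ with $\mathbb Z^s$-graded coordinate ring $R=k[x_{i,j}: 1\le i\le s,\ 0\le j\le n_i]$ and irrelevant ideal $B=B_1\cdots B_s$, $B_i=(x_{i,0},\ldots,x_{i,n_i})$. Let $A=k[T_1,\ldots,T_r]$, $S=R[T_1,\ldots,T_r]$ graded by $\mathbb Z^s\times\mathbb Z$ (with $\deg T_i=(0,1)$), let $J\subseteq S$ be an ideal generated by finitely many homogeneous elements, $\mathcal S=S/J$, and let $\mathfrak A(J):=(J:B^\infty)\cap A$. For $\nu\in\mathbb Z^s$ write $\mathcal S_\nu=\bigoplus_{t}\mathcal S_{(\nu,t)}$, a finitely generated graded $A$-module. If $\nu\in\mathbb N^s$ satisfies $H^0_B(\mathcal S)_\nu=0$, then $\mathfrak A(J)=\mathrm{ann}_A(\mathcal S_\nu)$, and there exists an integer $n_\nu$ such that $$\mathfrak A(J)^{n_\nu}\subseteq \mathrm{Fitt}^0_A(\mathcal S_\nu)\subseteq\mathfrak A(J).$$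
   Context: $\mathrm{Fitt}^0_A(M)$ is the initial Fitting ideal of a finitely presented $A$-module $M$ (ideal of maximal minors of a presentation matrix). $\mathfrak A(J)$ defines the image $\pi_2(\Gamma)$ of the subscheme $\Gamma\subseteq X\times\mathbb P^{r-1}_k$ defined by $J$ under the second projection. *)

theory Defs
  imports "HOL-Library.Poly_Mapping" "HOL-Combinatorics.Permutations"
begin

text \<open>Variables of S = R[T_1,...,T_r]: X i j stands for x_{i,j} (0-based factor
  index i), T l stands for T_{l+1} (0-based).\<close>
datatype var = X nat nat | T nat

type_synonym 'k mpoly = "(var \<Rightarrow>\<^sub>0 nat) \<Rightarrow>\<^sub>0 'k"

definition valid_var :: "nat \<Rightarrow> nat list \<Rightarrow> nat \<Rightarrow> var \<Rightarrow> bool" where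
  "valid_var s ns r v = (case v of X i j \<Rightarrow> i < s \<and> j \<le> ns ! i | T l \<Rightarrow> l < r)"

definition Sring :: "nat \<Rightarrow> nat list \<Rightarrow> nat \<Rightarrow> ('k::field) mpoly set" where
  "Sring s ns r = {f. \<forall>m \<in> Poly_Mapping.keys f. \<forall>v \<in> Poly_Mapping.keys m. valid_var s ns r v}"

definition Aring :: "nat \<Rightarrow> ('k::field) mpoly set" where
  "Aring r = {f. \<forall>m \<in> Poly_Mapping.keys f. \<forall>v \<in> Poly_Mapping.keys m. \<exists>l. v = T l \<and> l < r}"

definition var_poly :: "var \<Rightarrow> ('k::field) mpoly" where
  "var_poly v = Poly_Mapping.single (Poly_Mapping.single v 1) 1"

definition xdeg :: "nat \<Rightarrow> nat list \<Rightarrow> (var \<Rightarrow>\<^sub>0 nat) \<Rightarrow> nat list" where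
  "xdeg s ns m = map (\<lambda>i. \<Sum>j\<le>ns ! i. Poly_Mapping.lookup m (X i j)) [0..<s]"

definition tdeg :: "nat \<Rightarrow> (var \<Rightarrow>\<^sub>0 nat) \<Rightarrow> nat" where
  "tdeg r m = (\<Sum>l<r. Poly_Mapping.lookup m (T l))"

definition homog :: "nat \<Rightarrow> nat list \<Rightarrow> nat \<Rightarrow> nat list \<Rightarrow> nat \<Rightarrow> ('k::field) mpoly \<Rightarrow> bool" where
  "homog s ns r mu t f = (\<forall>m \<in> Poly_Mapping.keys f. xdeg s ns m = mu \<and> tdeg r m = t)"

definition Spiece :: "nat \<Rightarrow> nat list \<Rightarrow> nat \<Rightarrow> nat list \<Rightarrow> ('k::field) mpoly set" where
  "Spiece s ns r nu = {f \<in> Sring s ns r. \<forall>m \<in> Poly_Mapping.keys f. xdeg s ns m = nu}"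

definition gen_ideal :: "'a::comm_ring_1 set \<Rightarrow> 'a set \<Rightarrow> 'a set" where
  "gen_ideal C G = {(\<Sum>i<k. c i * g i) | (k::nat) c g. \<forall>i<k. c i \<in> C \<and> g i \<in> G}"

definition ideal_pow :: "'a::comm_ring_1 set \<Rightarrow> 'a set \<Rightarrow> nat \<Rightarrow> 'a set" where
  "ideal_pow C I n = gen_ideal C {(\<Prod>i<n. a i) | (a::nat \<Rightarrow> _). \<forall>i<n. a i \<in> I}"

definition Bi :: "nat \<Rightarrow> nat list \<Rightarrow> nat \<Rightarrow> nat \<Rightarrow> ('k::field) mpoly set" where
  "Bi s ns r i = gen_ideal (Sring s ns r) {var_poly (X i j) | j. j \<le> ns ! i}"

definition Birr :: "nat \<Rightarrow> nat list \<Rightarrow> nat \<Rightarrow> ('k::field) mpoly set" where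
  "Birr s ns r = gen_ideal (Sring s ns r) {(\<Prod>i<s. b i) | (b::nat \<Rightarrow> _). \<forall>i<s. b i \<in> Bi s ns r i}"

definition saturation :: "nat \<Rightarrow> nat list \<Rightarrow> nat \<Rightarrow> ('k::field) mpoly set \<Rightarrow> 'k mpoly set" where
  "saturation s ns r J = {f \<in> Sring s ns r. \<exists>e. \<forall>b \<in> ideal_pow (Sring s ns r) (Birr s ns r) e. b * f \<in> J}"

definition frakA :: "nat \<Rightarrow> nat list \<Rightarrow> nat \<Rightarrow> ('k::field) mpoly set \<Rightarrow> 'k mpoly set" where
  "frakA s ns r J = saturation s ns r J \<inter> Aring r"

text \<open>H^0_B(S/J)_nu = 0: every element of (S/J)_nu killed by a power of B is zero,
  i.e. (J:B^\<infinity>) \<inter> S_nu \<subseteq> J.\<close>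
definition H0B_piece_zero :: "nat \<Rightarrow> nat list \<Rightarrow> nat \<Rightarrow> ('k::field) mpoly set \<Rightarrow> nat list \<Rightarrow> bool" where
  "H0B_piece_zero s ns r J nu = (\<forall>f \<in> Spiece s ns r nu. f \<in> saturation s ns r J \<longrightarrow> f \<in> J)"

text \<open>ann_A((S/J)_nu), where (S/J)_nu = S_nu / (J \<inter> S_nu).\<close>
definition ann_piece :: "nat \<Rightarrow> nat list \<Rightarrow> nat \<Rightarrow> ('k::field) mpoly set \<Rightarrow> nat list \<Rightarrow> 'k mpoly set" where
  "ann_piece s ns r J nu = {a \<in> Aring r. \<forall>f \<in> Spiece s ns r nu. a * f \<in> J}"

definition detn :: "nat \<Rightarrow> (nat \<Rightarrow> nat \<Rightarrow> 'a::comm_ring_1) \<Rightarrow> 'a" where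
  "detn n M = (\<Sum>p \<in> {p. p permutes {..<n}}. of_int (sign p) * (\<Prod>i<n. M i (p i)))"

text \<open>Module M = Mset / N over the ring C (Mset a C-module inside an ambient ring,
  N \<subseteq> Mset a submodule).\<close>
definition generates :: "'a::comm_ring_1 set \<Rightarrow> 'a set \<Rightarrow> 'a set \<Rightarrow> 'a list \<Rightarrow> bool" where
  "generates C Mset N gs = (set gs \<subseteq> Mset \<and>
     (\<forall>f \<in> Mset. \<exists>a. (\<forall>i<length gs. a i \<in> C) \<and> f - (\<Sum>i<length gs. a i * gs ! i) \<in> N))"

definition relations :: "'a::comm_ring_1 set \<Rightarrow> 'a set \<Rightarrow> 'a list \<Rightarrow> (nat \<Rightarrow> 'a) set" where
  "relations C N gs = {a. (\<forall>i<length gs. a i \<in> C) \<and> (\<forall>i\<ge>length gs. a i = 0)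
       \<and> (\<Sum>i<length gs. a i * gs ! i) \<in> N}"

text \<open>Fitt^0 w.r.t. generators gs: ideal generated by the maximal minors of the
  presentation matrix whose rows are all relations, i.e. by det of all n x n
  matrices whose rows are relations (n = number of generators).\<close>
definition fitt0_wrt :: "'a::comm_ring_1 set \<Rightarrow> 'a set \<Rightarrow> 'a list \<Rightarrow> 'a set" where
  "fitt0_wrt C N gs = gen_ideal C
     {detn (length gs) (\<lambda>i j. rows i j) | rows. \<forall>i<length gs. rows i \<in> relations C N gs}"

text \<open>Fitt^0_C(Mset/N), computed from some finite generating list (it is independent
  of the choice).\<close>
definition fitt0 :: "'a::comm_ring_1 set \<Rightarrow> 'a set \<Rightarrow> 'a set \<Rightarrow> 'a set" where
  "fitt0 C Mset N = fitt0_wrt C N (SOME gs. generates C Mset N gs)"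

end

theory Submission
  imports Defs "Jordan_Normal_Form.Determinant"
begin


definition subr :: "'a::comm_ring_1 set \<Rightarrow> bool" where
  "subr C \<longleftrightarrow> 0 \<in> C \<and> 1 \<in> C \<and> (\<forall>x\<in>C. \<forall>y\<in>C. x + y \<in> C \<and> x * y \<in> C \<and> - x \<in> C)"

definition isId :: "'a::comm_ring_1 set \<Rightarrow> 'a set \<Rightarrow> bool" where
  "isId C I \<longleftrightarrow> 0 \<in> I \<and> (\<forall>x\<in>I. \<forall>y\<in>I. x + y \<in> I) \<and> (\<forall>c\<in>C. \<forall>x\<in>I. c * x \<in> I)"

lemma subr_sum: "subr C \<Longrightarrow> (\<And>i. i \<in> A \<Longrightarrow> f i \<in> C) \<Longrightarrow> sum f A \<in> C"
  by (induction A rule: infinite_finite_induct) (auto simp: subr_def)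

lemma subr_prod: "subr C \<Longrightarrow> (\<And>i. i \<in> A \<Longrightarrow> f i \<in> C) \<Longrightarrow> prod f A \<in> C"
  by (induction A rule: infinite_finite_induct) (auto simp: subr_def)

lemma subr_diff: "subr C \<Longrightarrow> x \<in> C \<Longrightarrow> y \<in> C \<Longrightarrow> x - y \<in> C"
  unfolding subr_def by (metis diff_conv_add_uminus)

lemma isId_sum: "isId C I \<Longrightarrow> (\<And>i. i \<in> A \<Longrightarrow> f i \<in> I) \<Longrightarrow> sum f A \<in> I"
  by (induction A rule: infinite_finite_induct) (auto simp: isId_def)

lemma gen_ideal_least:
  assumes "isId C I" "G \<subseteq> I" shows "gen_ideal C G \<subseteq> I"
proof
  fix x assume "x \<in> gen_ideal C G"
  then obtain k c g where x: "x = (\<Sum>i<(k::nat). c i * g i)" and cg: "\<forall>i<k. c i \<in> C \<and> g i \<in> G"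
    unfolding gen_ideal_def by blast
  show "x \<in> I" unfolding x
    by (rule isId_sum[OF assms(1)]) (use assms cg in \<open>auto simp: isId_def\<close>)
qed

lemma gen_ideal_sub: "subr C \<Longrightarrow> G \<subseteq> C \<Longrightarrow> gen_ideal C G \<subseteq> C"
  unfolding gen_ideal_def by (auto intro!: subr_sum simp: subr_def)

lemma gen_ideal_gen: "subr C \<Longrightarrow> g \<in> G \<Longrightarrow> g \<in> gen_ideal C G"
  unfolding gen_ideal_def subr_def
  by (rule CollectI, rule exI[of _ 1], rule exI[of _ "\<lambda>_. 1"], rule exI[of _ "\<lambda>_. g"]) auto

lemma sum_split_add: "(\<Sum>i<(k1::nat)+k2. f i) = (\<Sum>i<k1. f i) + (\<Sum>i<k2. f (k1 + i))"
  by (induction k2 arbitrary: f) (auto simp: add.assoc)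

lemma gen_ideal_isId: assumes "subr C" shows "isId C (gen_ideal C G)"
  unfolding isId_def
proof (intro conjI ballI)
  show "0 \<in> gen_ideal C G" unfolding gen_ideal_def by force
next
  fix x y assume "x \<in> gen_ideal C G" "y \<in> gen_ideal C G"
  then obtain k1 c1 g1 k2 c2 g2 where x: "x = (\<Sum>i<(k1::nat). c1 i * g1 i)" and cg1: "\<forall>i<k1. c1 i \<in> C \<and> g1 i \<in> G"
    and y: "y = (\<Sum>i<(k2::nat). c2 i * g2 i)" and cg2: "\<forall>i<k2. c2 i \<in> C \<and> g2 i \<in> G"
    unfolding gen_ideal_def by blast
  define c where "c i = (if i < k1 then c1 i else c2 (i - k1))" for i
  define g where "g i = (if i < k1 then g1 i else g2 (i - k1))" for i
  have "x + y = (\<Sum>i<k1+k2. c i * g i)"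
    unfolding sum_split_add x y c_def g_def by simp
  moreover have "\<forall>i<k1+k2. c i \<in> C \<and> g i \<in> G" using cg1 cg2 unfolding c_def g_def by auto
  ultimately show "x + y \<in> gen_ideal C G" unfolding gen_ideal_def by blast
next
  fix a x assume a: "a \<in> C" and "x \<in> gen_ideal C G"
  then obtain k c g where x: "x = (\<Sum>i<(k::nat). c i * g i)" and cg: "\<forall>i<k. c i \<in> C \<and> g i \<in> G"
    unfolding gen_ideal_def by blast
  have "a * x = (\<Sum>i<k. (a * c i) * g i)" unfolding x by (simp add: sum_distrib_left mult.assoc)
  moreover have "\<forall>i<k. a * c i \<in> C \<and> g i \<in> G" using cg a assms by (auto simp: subr_def)
  ultimately show "a * x \<in> gen_ideal C G" unfolding gen_ideal_def
    by (intro CollectI exI[of _ k] exI[of _ "\<lambda>i. a * c i"] exI[of _ g]) auto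
qed

definition PV :: "(var \<Rightarrow> bool) \<Rightarrow> ('k::field) mpoly set" where
  "PV P = {f. \<forall>m \<in> Poly_Mapping.keys f. \<forall>v \<in> Poly_Mapping.keys m. P v}"

lemma keys_add_nat: "Poly_Mapping.keys ((a::var \<Rightarrow>\<^sub>0 nat) + b) = Poly_Mapping.keys a \<union> Poly_Mapping.keys b"
  by (auto simp: in_keys_iff lookup_add)

lemma subr_PV: "subr (PV P)"
  unfolding subr_def PV_def
proof (intro conjI ballI; (elim CollectE)?)
  fix x y :: "'k::field mpoly"
  assume x: "\<forall>m\<in>Poly_Mapping.keys x. \<forall>v\<in>Poly_Mapping.keys m. P v"
    and y: "\<forall>m\<in>Poly_Mapping.keys y. \<forall>v\<in>Poly_Mapping.keys m. P v"
  show "x + y \<in> {f. \<forall>m\<in>Poly_Mapping.keys f. \<forall>v\<in>Poly_Mapping.keys m. P v}"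
    using x y keys_add[of x y] by blast
  show "- x \<in> {f. \<forall>m\<in>Poly_Mapping.keys f. \<forall>v\<in>Poly_Mapping.keys m. P v}"
    using x by simp
  show "x * y \<in> {f. \<forall>m\<in>Poly_Mapping.keys f. \<forall>v\<in>Poly_Mapping.keys m. P v}"
    using x y keys_mult[of x y] by (force simp: keys_add_nat)
qed auto



lemma Sring_PV: "Sring s ns r = PV (valid_var s ns r)"
  unfolding Sring_def PV_def by simp

lemma Aring_PV: "Aring r = PV (\<lambda>v. \<exists>l. v = T l \<and> l < r)"
  unfolding Aring_def PV_def by simp

lemma PV_mono: "(\<And>v. P v \<Longrightarrow> Q v) \<Longrightarrow> PV P \<subseteq> PV Q"
  unfolding PV_def by auto

lemma subr_S: "subr (Sring s ns r)" by (simp add: Sring_PV subr_PV)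
lemma subr_A: "subr (Aring r)" by (simp add: Aring_PV subr_PV)
lemma A_sub_S: "Aring r \<subseteq> Sring s ns r"
  unfolding Aring_PV Sring_PV by (rule PV_mono) (auto simp: valid_var_def)

definition xd :: "nat list \<Rightarrow> nat \<Rightarrow> (var \<Rightarrow>\<^sub>0 nat) \<Rightarrow> nat" where
  "xd ns i m = (\<Sum>j\<le>ns ! i. Poly_Mapping.lookup m (X i j))"

lemma xd_add: "xd ns i (a + b) = xd ns i a + xd ns i b"
  unfolding xd_def by (simp add: lookup_add sum.distrib)

lemma xd_zero[simp]: "xd ns i 0 = 0" unfolding xd_def by simp

definition Dge :: "nat list \<Rightarrow> nat \<Rightarrow> nat \<Rightarrow> ('k::field) mpoly set" where
  "Dge ns i d = {f. \<forall>m\<in>Poly_Mapping.keys f. d \<le> xd ns i m}"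

lemma Dge_mult: assumes "f \<in> Dge ns i d" "g \<in> Dge ns i d'" shows "f * g \<in> Dge ns i (d + d')"
  using assms keys_mult[of f g] unfolding Dge_def by (force simp: xd_add)

lemma Dge_0: "f \<in> Dge ns i 0" unfolding Dge_def by simp

lemma Dge_mono: "d' \<le> d \<Longrightarrow> Dge ns i d \<subseteq> Dge ns i d'" unfolding Dge_def by force

lemma isId_Dge: "isId C (Dge ns i d)"
  unfolding isId_def
proof (intro conjI ballI)
  show "0 \<in> Dge ns i d" unfolding Dge_def by simp
  fix x y :: "'k::field mpoly" assume "x \<in> Dge ns i d" "y \<in> Dge ns i d"
  then show "x + y \<in> Dge ns i d" using keys_add[of x y] unfolding Dge_def by blast
next
  fix c x :: "'k::field mpoly" assume "x \<in> Dge ns i d"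
  then show "c * x \<in> Dge ns i d" using Dge_mult[OF Dge_0[of c] ] by fastforce
qed

lemma Dge_one: "1 \<in> Dge ns i 0" by (rule Dge_0)

lemma Dge_prod: "(\<And>k. k \<in> K \<Longrightarrow> f k \<in> Dge ns i (d k)) \<Longrightarrow> prod f K \<in> Dge ns i (sum d K)"
proof (induction K rule: infinite_finite_induct)
  case (insert x F)
  then show ?case using Dge_mult[of "f x" ns i "d x" "prod f F" "sum d F"] by simp
qed (auto intro: Dge_0)

lemma var_Dge: "j \<le> ns ! i \<Longrightarrow> var_poly (X i j) \<in> Dge ns i 1"
  unfolding Dge_def var_poly_def xd_def
  by (simp add: lookup_single when_def)

lemma Bi_Dge: "Bi s ns r i \<subseteq> Dge ns i 1"
  unfolding Bi_def by (rule gen_ideal_least[OF isId_Dge]) (use var_Dge in blast)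

lemma Birr_Dge: assumes "i < s" shows "Birr s ns r \<subseteq> Dge ns i 1"
  unfolding Birr_def
proof (rule gen_ideal_least[OF isId_Dge], safe)
  fix b :: "nat \<Rightarrow> 'a mpoly" assume b: "\<forall>i<s. b i \<in> Bi s ns r i"
  have "prod b {..<s} \<in> Dge ns i (\<Sum>k<s. if k = i then 1 else 0)"
    apply (rule Dge_prod) using b Bi_Dge Dge_0 by fastforce
  then show "prod b {..<s} \<in> Dge ns i 1" using assms by simp
qed

lemma pow_Dge: assumes "I \<subseteq> Dge ns i 1" shows "ideal_pow C I e \<subseteq> Dge ns i e"
  unfolding ideal_pow_def
proof (rule gen_ideal_least[OF isId_Dge], safe)
  fix a :: "nat \<Rightarrow> 'a mpoly" assume a: "\<forall>i<e. a i \<in> I"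
  have "prod a {..<e} \<in> Dge ns i (\<Sum>k<e. 1)"
    apply (rule Dge_prod) using a assms by auto
  then show "prod a {..<e} \<in> Dge ns i e" by simp
qed



lemma xd_single: "j \<le> ns ! i \<Longrightarrow> xd ns i' (Poly_Mapping.single (X i j) 1) = (if i' = i then 1 else 0)"
  unfolding xd_def by (auto simp: lookup_single when_def)

lemma reduce_mono:
  "(\<forall>i<s. nu ! i \<le> xd ns i m) \<Longrightarrow>
   \<exists>m'. (\<forall>i<s. xd ns i m' = nu ! i) \<and> (\<forall>v. Poly_Mapping.lookup m' v \<le> Poly_Mapping.lookup m v)"
proof (induction "\<Sum>i<s. xd ns i m" arbitrary: m rule: less_induct)
  case less
  show ?case
  proof (cases "\<forall>i<s. xd ns i m = nu ! i")
    case True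
    then show ?thesis by blast
  next
    case False
    then obtain i where i: "i < s" "nu ! i < xd ns i m" using less.prems by force
    then have "0 < xd ns i m" by simp
    then obtain j where j: "j \<le> ns ! i" "0 < Poly_Mapping.lookup m (X i j)"
    proof -
      have "\<not> (\<forall>j\<in>{..ns ! i}. Poly_Mapping.lookup m (X i j) = 0)"
        using \<open>0 < xd ns i m\<close> unfolding xd_def by (metis (no_types, lifting) less_irrefl sum.neutral)
      then show ?thesis using that by auto
    qed
    define m1 where "m1 = m - Poly_Mapping.single (X i j) 1"
    have m: "m = m1 + Poly_Mapping.single (X i j) 1"
      unfolding m1_def using j
      by (intro poly_mapping_eqI) (auto simp: lookup_add lookup_minus lookup_single when_def)
    have xdm: "xd ns i' m = xd ns i' m1 + (if i' = i then 1 else 0)" for i'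
      using xd_single[OF j(1), of i'] by (subst m, simp only: xd_add)
    have lt: "(\<Sum>i<s. xd ns i m1) < (\<Sum>i<s. xd ns i m)"
      by (rule sum_strict_mono_ex1) (use i in \<open>auto simp: xdm\<close>)
    have pre: "\<forall>i'<s. nu ! i' \<le> xd ns i' m1"
    proof (intro allI impI)
      fix i' assume "i' < s"
      then show "nu ! i' \<le> xd ns i' m1" using less.prems xdm[of i'] i by (cases "i' = i") auto
    qed
    obtain m' where m': "\<forall>i<s. xd ns i m' = nu ! i" "\<forall>v. Poly_Mapping.lookup m' v \<le> Poly_Mapping.lookup m1 v"
      using less.hyps[OF lt pre] by blast
    have "Poly_Mapping.lookup m1 v \<le> Poly_Mapping.lookup m v" for v
      unfolding m1_def by (simp add: lookup_minus)
    then show ?thesis using m' le_trans by blast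
  qed
qed

lemma pm_expand: "(f::'a \<Rightarrow>\<^sub>0 'b::comm_monoid_add) = (\<Sum>m\<in>Poly_Mapping.keys f. Poly_Mapping.single m (Poly_Mapping.lookup f m))"
  by (intro poly_mapping_eqI) (auto simp: lookup_sum lookup_single when_def in_keys_iff)

lemma xdeg_xd: "xdeg s ns m = map (\<lambda>i. xd ns i m) [0..<s]"
  unfolding xdeg_def xd_def by simp

lemma xdeg_eq: "length nu = s \<Longrightarrow> (xdeg s ns m = nu) \<longleftrightarrow> (\<forall>i<s. xd ns i m = nu ! i)"
  unfolding xdeg_xd by (auto simp: list_eq_iff_nth_eq)

lemma K_lemma:
  assumes f: "f \<in> Sring s ns r" and nu: "length nu = s"
    and D: "\<forall>i<s. f \<in> Dge ns i (nu ! i)"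
  shows "f \<in> gen_ideal (Sring s ns r) (Spiece s ns r nu)"
proof -
  let ?S = "Sring s ns r"
  have I: "isId ?S (gen_ideal ?S (Spiece s ns r nu))" by (rule gen_ideal_isId[OF subr_S])
  have "Poly_Mapping.single m (Poly_Mapping.lookup f m) \<in> gen_ideal ?S (Spiece s ns r nu)"
    if m: "m \<in> Poly_Mapping.keys f" for m
  proof -
    have vm: "\<forall>v\<in>Poly_Mapping.keys m. valid_var s ns r v" using f m unfolding Sring_def by blast
    have "\<forall>i<s. nu ! i \<le> xd ns i m" using D m unfolding Dge_def by blast
    then obtain m' where m': "\<forall>i<s. xd ns i m' = nu ! i" "\<forall>v. Poly_Mapping.lookup m' v \<le> Poly_Mapping.lookup m v"
      using reduce_mono by blast
    define m'' where "m'' = m - m'"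
    have mm: "m = m'' + m'" unfolding m''_def using m'(2)
      by (intro poly_mapping_eqI) (auto simp: lookup_add lookup_minus)
    have k': "Poly_Mapping.keys m' \<subseteq> Poly_Mapping.keys m"
      using m'(2) by (auto simp: in_keys_iff) (meson less_le_trans)
    have k'': "Poly_Mapping.keys m'' \<subseteq> Poly_Mapping.keys m"
      unfolding m''_def by (auto simp: in_keys_iff lookup_minus)
    have eq: "Poly_Mapping.single m (Poly_Mapping.lookup f m)
        = Poly_Mapping.single m'' (Poly_Mapping.lookup f m) * Poly_Mapping.single m' 1"
      by (simp add: mult_single mm)
    have c: "Poly_Mapping.single m'' (Poly_Mapping.lookup f m) \<in> ?S"
      unfolding Sring_def using k'' vm by auto
    have g: "Poly_Mapping.single m' (1::'a) \<in> Spiece s ns r nu"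
      unfolding Spiece_def Sring_def using k' vm m'(1) xdeg_eq[OF nu] by auto
    show ?thesis unfolding eq using I c gen_ideal_gen[OF subr_S g] unfolding isId_def by blast
  qed
  then have "(\<Sum>m\<in>Poly_Mapping.keys f. Poly_Mapping.single m (Poly_Mapping.lookup f m))
     \<in> gen_ideal ?S (Spiece s ns r nu)" by (intro isId_sum[OF I])
  then show ?thesis using pm_expand[of f] by simp
qed



lemma xd_A: "a \<in> Aring r \<Longrightarrow> ma \<in> Poly_Mapping.keys a \<Longrightarrow> xd ns i ma = 0"
proof -
  assume a: "a \<in> Aring r" and m: "ma \<in> Poly_Mapping.keys a"
  have "Poly_Mapping.lookup ma (X i j) = 0" for j
  proof (rule ccontr)
    assume "Poly_Mapping.lookup ma (X i j) \<noteq> 0"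
    then have "X i j \<in> Poly_Mapping.keys ma" by (simp add: in_keys_iff)
    then show False using a m unfolding Aring_def by blast
  qed
  then show ?thesis unfolding xd_def by simp
qed

lemma A_times_Spiece:
  assumes a: "a \<in> Aring r" and f: "f \<in> Spiece s ns r nu"
  shows "a * f \<in> Spiece s ns r nu"
proof -
  have "a * f \<in> Sring s ns r"
    using a f A_sub_S subr_S unfolding Spiece_def subr_def by blast
  moreover have "xdeg s ns m = nu" if m: "m \<in> Poly_Mapping.keys (a * f)" for m
  proof -
    obtain ma mf where "m = ma + mf" "ma \<in> Poly_Mapping.keys a" "mf \<in> Poly_Mapping.keys f"
      using keys_mult[of a f] m by blast
    moreover have "xdeg s ns mf = nu" using f \<open>mf \<in> _\<close> unfolding Spiece_def by blast
    ultimately show ?thesis using xd_A[OF a] by (simp add: xdeg_xd xd_add)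
  qed
  ultimately show ?thesis unfolding Spiece_def by blast
qed

lemma var_S: "i < s \<Longrightarrow> j \<le> ns ! i \<Longrightarrow> var_poly (X i j) \<in> Sring s ns r"
  unfolding var_poly_def Sring_def valid_var_def by simp

lemma Bi_S: "i < s \<Longrightarrow> Bi s ns r i \<subseteq> Sring s ns r"
  unfolding Bi_def by (rule gen_ideal_sub[OF subr_S]) (use var_S in blast)

lemma Birr_S: "Birr s ns r \<subseteq> Sring s ns r"
  unfolding Birr_def
proof (rule gen_ideal_sub[OF subr_S], safe)
  fix b :: "nat \<Rightarrow> 'a mpoly" assume "\<forall>i<s. b i \<in> Bi s ns r i"
  then show "prod b {..<s} \<in> Sring s ns r" using Bi_S by (intro subr_prod[OF subr_S]) blast
qed

lemma pow_S: "I \<subseteq> Sring s ns r \<Longrightarrow> ideal_pow (Sring s ns r) I e \<subseteq> Sring s ns r"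
  unfolding ideal_pow_def
  by (rule gen_ideal_sub[OF subr_S]) (auto intro!: subr_prod[OF subr_S])

lemma part1:
  assumes J: "J = gen_ideal (Sring s ns r) G" and nu: "length nu = s"
    and H: "H0B_piece_zero s ns r J nu"
  shows "frakA s ns r J = ann_piece s ns r J nu"
proof
  let ?S = "Sring s ns r"
  have IJ: "isId ?S J" unfolding J by (rule gen_ideal_isId[OF subr_S])
  show "frakA s ns r J \<subseteq> ann_piece s ns r J nu"
  proof
    fix a assume "a \<in> frakA s ns r J"
    then have aA: "a \<in> Aring r" and aS: "a \<in> ?S"
      and e: "\<exists>e. \<forall>b \<in> ideal_pow ?S (Birr s ns r) e. b * a \<in> J"
      unfolding frakA_def saturation_def by auto
    have "a * f \<in> J" if f: "f \<in> Spiece s ns r nu" for f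
    proof -
      have af: "a * f \<in> Spiece s ns r nu" by (rule A_times_Spiece[OF aA f])
      have fS: "f \<in> ?S" using f unfolding Spiece_def by blast
      have "\<exists>e. \<forall>b \<in> ideal_pow ?S (Birr s ns r) e. b * (a * f) \<in> J"
      proof -
        obtain e where e: "\<forall>b \<in> ideal_pow ?S (Birr s ns r) e. b * a \<in> J" using e by blast
        have "b * (a * f) \<in> J" if "b \<in> ideal_pow ?S (Birr s ns r) e" for b
        proof -
          have "f * (b * a) \<in> J" using IJ fS e that unfolding isId_def by blast
          then show ?thesis by (simp add: ac_simps)
        qed
        then show ?thesis by blast
      qed
      then have "a * f \<in> saturation s ns r J"
        using af unfolding saturation_def Spiece_def by blast
      then show ?thesis using H af unfolding H0B_piece_zero_def by blast
    qed
    then show "a \<in> ann_piece s ns r J nu" using aA unfolding ann_piece_def by blast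
  qed
  show "ann_piece s ns r J nu \<subseteq> frakA s ns r J"
  proof
    fix a assume "a \<in> ann_piece s ns r J nu"
    then have aA: "a \<in> Aring r" and ann: "\<forall>f \<in> Spiece s ns r nu. a * f \<in> J"
      unfolding ann_piece_def by auto
    have aS: "a \<in> ?S" using aA A_sub_S by blast
    let ?e = "sum_list nu"
    have "b * a \<in> J" if b: "b \<in> ideal_pow ?S (Birr s ns r) ?e" for b
    proof -
      have bS: "b \<in> ?S" using b pow_S[OF Birr_S] by blast
      have "\<forall>i<s. b \<in> Dge ns i (nu ! i)"
      proof (intro allI impI)
        fix i assume i: "i < s"
        have "b \<in> Dge ns i ?e" using b pow_Dge[OF Birr_Dge[OF i]] by blast
        moreover have "nu ! i \<le> ?e" using i nu by (simp add: elem_le_sum_list)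
        ultimately show "b \<in> Dge ns i (nu ! i)" using Dge_mono by blast
      qed
      then have bg: "b \<in> gen_ideal ?S (Spiece s ns r nu)" using K_lemma[OF bS nu] by blast
      have "isId ?S {b. b * a \<in> J}"
        using IJ unfolding isId_def by (auto simp: distrib_right mult.assoc)
      moreover have "Spiece s ns r nu \<subseteq> {b. b * a \<in> J}" using ann by (auto simp: mult.commute)
      ultimately show ?thesis using gen_ideal_least bg by blast
    qed
    then show "a \<in> frakA s ns r J"
      using aA aS unfolding frakA_def saturation_def by blast
  qed
qed



definition isX :: "var \<Rightarrow> bool" where "isX v = (case v of X _ _ \<Rightarrow> True | T _ \<Rightarrow> False)"

definition xpart :: "(var \<Rightarrow>\<^sub>0 nat) \<Rightarrow> (var \<Rightarrow>\<^sub>0 nat)" where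
  "xpart m = Abs_poly_mapping (\<lambda>v. if isX v then Poly_Mapping.lookup m v else 0)"
definition tpart :: "(var \<Rightarrow>\<^sub>0 nat) \<Rightarrow> (var \<Rightarrow>\<^sub>0 nat)" where
  "tpart m = Abs_poly_mapping (\<lambda>v. if isX v then 0 else Poly_Mapping.lookup m v)"

lemma lookup_xpart: "Poly_Mapping.lookup (xpart m) v = (if isX v then Poly_Mapping.lookup m v else 0)"
proof -
  have "finite {v. (if isX v then Poly_Mapping.lookup m v else 0) \<noteq> 0}"
    by (rule finite_subset[of _ "Poly_Mapping.keys m"]) (auto simp: in_keys_iff)
  then show ?thesis unfolding xpart_def by simp
qed

lemma lookup_tpart: "Poly_Mapping.lookup (tpart m) v = (if isX v then 0 else Poly_Mapping.lookup m v)"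
proof -
  have "finite {v. (if isX v then 0 else Poly_Mapping.lookup m v) \<noteq> 0}"
    by (rule finite_subset[of _ "Poly_Mapping.keys m"]) (auto simp: in_keys_iff)
  then show ?thesis unfolding tpart_def by simp
qed

lemma tpart_xpart: "tpart m + xpart m = m"
  by (intro poly_mapping_eqI) (simp add: lookup_add lookup_xpart lookup_tpart)

lemma xd_xpart: "xd ns i (xpart m) = xd ns i m"
  unfolding xd_def by (simp add: lookup_xpart isX_def)

definition Mx :: "nat \<Rightarrow> nat list \<Rightarrow> nat list \<Rightarrow> (var \<Rightarrow>\<^sub>0 nat) set" where
  "Mx s ns nu = {m. (\<forall>v\<in>Poly_Mapping.keys m. \<exists>i j. v = X i j \<and> i < s \<and> j \<le> ns ! i) \<and> xdeg s ns m = nu}"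

lemma finite_Mx: assumes nu: "length nu = s" shows "finite (Mx s ns nu)"
proof -
  define V where "V = (\<lambda>(i,j). X i j) ` (SIGMA i:{..<s}. {..ns ! i})"
  define K where "K = sum_list nu"
  have fV: "finite V" unfolding V_def by auto
  have kV: "Poly_Mapping.keys m \<subseteq> V" if "m \<in> Mx s ns nu" for m
    using that unfolding Mx_def V_def by force
  have bound: "Poly_Mapping.lookup m v \<le> K" if m: "m \<in> Mx s ns nu" and v: "v \<in> Poly_Mapping.keys m" for m v
  proof -
    obtain i j where ij: "v = X i j" "i < s" "j \<le> ns ! i" using m v unfolding Mx_def by blast
    have "Poly_Mapping.lookup m v \<le> xd ns i m"
      unfolding xd_def ij(1) by (rule member_le_sum) (use ij in auto)
    also have "xd ns i m = nu ! i" using m ij(2) xdeg_eq[OF nu] unfolding Mx_def by blast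
    also have "\<dots> \<le> K" unfolding K_def using ij(2) nu by (simp add: elem_le_sum_list)
    finally show ?thesis .
  qed
  have inj: "inj_on (\<lambda>m. restrict (Poly_Mapping.lookup m) V) (Mx s ns nu)"
  proof (rule inj_onI)
    fix m1 m2 assume m1: "m1 \<in> Mx s ns nu" and m2: "m2 \<in> Mx s ns nu"
      and eq: "restrict (Poly_Mapping.lookup m1) V = restrict (Poly_Mapping.lookup m2) V"
    show "m1 = m2"
    proof (rule poly_mapping_eqI)
      fix v show "Poly_Mapping.lookup m1 v = Poly_Mapping.lookup m2 v"
      proof (cases "v \<in> V")
        case True then show ?thesis using fun_cong[OF eq, of v] by simp
      next
        case False then show ?thesis using kV[OF m1] kV[OF m2] by (metis in_keys_iff subsetD)
      qed
    qed
  qed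
  have "(\<lambda>m. restrict (Poly_Mapping.lookup m) V) ` Mx s ns nu \<subseteq> PiE V (\<lambda>_. {0..K})"
  proof safe
    fix m v assume m: "m \<in> Mx s ns nu" and v: "v \<in> V"
    show "restrict (Poly_Mapping.lookup m) V v \<in> {0..K}"
      using bound[OF m, of v] v by (cases "v \<in> Poly_Mapping.keys m") (auto simp: in_keys_iff)
  qed auto
  then have "finite ((\<lambda>m. restrict (Poly_Mapping.lookup m) V) ` Mx s ns nu)"
    by (rule finite_subset) (intro finite_PiE fV, simp)
  then show ?thesis using finite_imageD inj by blast
qed



lemma gen_exists:
  assumes J: "J = gen_ideal (Sring s ns r) G" and nu: "length nu = s"
  shows "\<exists>gs. generates (Aring r) (Spiece s ns r nu) (J \<inter> Spiece s ns r nu) (gs::('k::field) mpoly list)"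
proof -
  obtain L where L: "distinct L" "set L = Mx s ns nu" using finite_distinct_list[OF finite_Mx[OF nu]] by blast
  define gs :: "'k mpoly list" where "gs = map (\<lambda>g. Poly_Mapping.single g 1) L"
  have "set gs \<subseteq> Spiece s ns r nu"
  proof
    fix x assume "x \<in> set gs"
    then obtain g where g: "g \<in> Mx s ns nu" "x = Poly_Mapping.single g 1" unfolding gs_def using L by auto
    then show "x \<in> Spiece s ns r nu"
      unfolding Spiece_def Sring_def Mx_def valid_var_def by force
  qed
  moreover have "\<exists>a. (\<forall>i<length gs. a i \<in> Aring r) \<and> f - (\<Sum>i<length gs. a i * gs ! i) \<in> J \<inter> Spiece s ns r nu"
    if f: "f \<in> Spiece s ns r nu" for f
  proof -
    let ?c = "\<lambda>m. Poly_Mapping.lookup f m"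
    define F where "F g = (\<Sum>m\<in>{m\<in>Poly_Mapping.keys f. xpart m = g}. Poly_Mapping.single (tpart m) (?c m))" for g
    define a where "a i = F (L ! i)" for i
    have aA: "a i \<in> Aring r" for i
      unfolding a_def F_def
    proof (rule subr_sum[OF subr_A])
      fix m assume m: "m \<in> {m\<in>Poly_Mapping.keys f. xpart m = L ! i}"
      have "\<forall>v\<in>Poly_Mapping.keys m. valid_var s ns r v" using f m unfolding Spiece_def Sring_def by blast
      then show "Poly_Mapping.single (tpart m) (?c m) \<in> Aring r"
        unfolding Aring_def valid_var_def
        by (auto simp: in_keys_iff lookup_tpart isX_def split: var.splits if_splits)
    qed
    have xM: "xpart m \<in> Mx s ns nu" if m: "m \<in> Poly_Mapping.keys f" for m
    proof -
      have vm: "\<forall>v\<in>Poly_Mapping.keys m. valid_var s ns r v" and xm: "xdeg s ns m = nu"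
        using f m unfolding Spiece_def Sring_def by auto
      have "\<forall>v\<in>Poly_Mapping.keys (xpart m). \<exists>i j. v = X i j \<and> i < s \<and> j \<le> ns ! i"
        using vm by (auto simp: in_keys_iff lookup_xpart isX_def valid_var_def split: var.splits if_splits)
      moreover have "xdeg s ns (xpart m) = nu" using xm by (simp add: xdeg_xd xd_xpart)
      ultimately show ?thesis unfolding Mx_def by blast
    qed
    have "(\<Sum>i<length gs. a i * gs ! i) = (\<Sum>i<length L. F (L ! i) * Poly_Mapping.single (L ! i) 1)"
      unfolding gs_def a_def by simp
    also have "\<dots> = sum_list (map (\<lambda>g. F g * Poly_Mapping.single g 1) L)"
      by (simp add: sum_list_sum_nth atLeast0LessThan)
    also have "\<dots> = (\<Sum>g\<in>Mx s ns nu. F g * Poly_Mapping.single g 1)"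
      using L by (simp add: sum_list_distinct_conv_sum_set)
    also have "\<dots> = (\<Sum>g\<in>Mx s ns nu. \<Sum>m\<in>{m\<in>Poly_Mapping.keys f. xpart m = g}. Poly_Mapping.single m (?c m))"
    proof (rule sum.cong[OF refl])
      fix g
      show "F g * Poly_Mapping.single g 1 = (\<Sum>m\<in>{m\<in>Poly_Mapping.keys f. xpart m = g}. Poly_Mapping.single m (?c m))"
        unfolding F_def sum_distrib_right
        by (rule sum.cong[OF refl]) (auto simp: mult_single tpart_xpart)
    qed
    also have "\<dots> = (\<Sum>m\<in>Poly_Mapping.keys f. Poly_Mapping.single m (?c m))"
      by (rule sum.group) (use finite_Mx[OF nu] xM in auto)
    also have "\<dots> = f" by (rule pm_expand[symmetric])
    finally have eq: "f - (\<Sum>i<length gs. a i * gs ! i) = 0" by simp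
    have "0 \<in> J" unfolding J using gen_ideal_isId[OF subr_S] unfolding isId_def by blast
    moreover have "0 \<in> Spiece s ns r nu" unfolding Spiece_def Sring_def by simp
    ultimately show ?thesis using aA eq by (intro exI[of _ a]) simp
  qed
  ultimately show ?thesis unfolding generates_def by blast
qed



lemma subr_signof: "subr C \<Longrightarrow> (of_int (sign p) :: 'a::comm_ring_1) \<in> C"
  unfolding sign_def subr_def by auto

lemma subr_det:
  assumes C: "subr C" and B: "B \<in> carrier_mat n n"
    and e: "\<And>i j. i < n \<Longrightarrow> j < n \<Longrightarrow> B $$ (i,j) \<in> C"
  shows "det B \<in> C"
  unfolding det_def'[OF B]
proof (rule subr_sum[OF C])
  fix p assume "p \<in> {p. p permutes {0..<n}}"
  then have p: "p permutes {0..<n}" by simp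
  have "(\<Prod>i = 0..<n. B $$ (i, p i)) \<in> C"
    by (rule subr_prod[OF C]) (use e permutes_in_image[OF p] in auto)
  then show "of_int (sign p) * (\<Prod>i = 0..<n. B $$ (i, p i)) \<in> C"
    using subr_signof[OF C, of p] C unfolding subr_def by blast
qed

lemma detn_det: "detn n M = det (mat n n (\<lambda>(i,j). M i j))"
proof -
  have "detn n M = (\<Sum>p \<in> {p. p permutes {0..<n}}. of_int (sign p) * (\<Prod>i = 0..<n. mat n n (\<lambda>(i,j). M i j) $$ (i, p i)))"
    unfolding detn_def atLeast0LessThan
  proof (rule sum.cong[OF refl])
    fix p assume "p \<in> {p. p permutes {..<n}}"
    then have p: "p permutes {..<n}" by simp
    show "of_int (sign p) * (\<Prod>i<n. M i (p i)) = of_int (sign p) * (\<Prod>i<n. mat n n (\<lambda>(i,j). M i j) $$ (i, p i))"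
      by (intro arg_cong[where f="\<lambda>x. _ * x"] prod.cong refl) (use permutes_in_image[OF p] in auto)
  qed
  then show ?thesis using det_def'[of "mat n n (\<lambda>(i,j). M i j)" n] by simp
qed

lemma detn_in:
  assumes C: "subr C" and e: "\<And>i j. i < n \<Longrightarrow> j < n \<Longrightarrow> M i j \<in> C"
  shows "detn n M \<in> C"
  unfolding detn_det by (rule subr_det[OF C]) (use e in auto)

lemma cofactor_in:
  assumes C: "subr C" and e: "\<And>i j. i < n \<Longrightarrow> j < n \<Longrightarrow> M i j \<in> C"
  shows "cofactor (mat n n (\<lambda>(i,j). M i j)) i j \<in> C"
proof -
  have "det (mat_delete (mat n n (\<lambda>(i,j). M i j)) i j) \<in> C"
    by (rule subr_det[OF C, of _ "n - 1"]) (use e in \<open>auto simp: mat_delete_def\<close>)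
  moreover have "((-1)^(i+j) :: 'a) \<in> C"
  proof -
    have m1: "(-1::'a) \<in> C" using C unfolding subr_def by blast
    have "(-1::'a)^k \<in> C" for k by (induction k) (use C m1 in \<open>auto simp: subr_def\<close>)
    then show ?thesis by blast
  qed
  ultimately show ?thesis unfolding cofactor_def using C subr_def by blast
qed

lemma det_kills:
  assumes C: "subr C" and I: "isId C I"
    and e: "\<And>i j. i < n \<Longrightarrow> j < n \<Longrightarrow> M i j \<in> C"
    and rel: "\<And>i. i < n \<Longrightarrow> (\<Sum>k<n. M i k * g k) \<in> I"
    and j: "j < n"
  shows "detn n M * g j \<in> I"
proof -
  define Mt where "Mt = mat n n (\<lambda>(i,j). M i j)"
  have Mt: "Mt \<in> carrier_mat n n" unfolding Mt_def by simp
  have adj: "adj_mat Mt * Mt = det Mt \<cdot>\<^sub>m 1\<^sub>m n" by (rule adj_mat(3)[OF Mt])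
  have ent: "(\<Sum>i<n. cofactor Mt i j * M i k) = (if j = k then detn n M else 0)" if k: "k < n" for k
  proof -
    have "(adj_mat Mt * Mt) $$ (j,k) = (det Mt \<cdot>\<^sub>m 1\<^sub>m n) $$ (j,k)" using adj by simp
    moreover have "(adj_mat Mt * Mt) $$ (j,k) = (\<Sum>i<n. cofactor Mt i j * M i k)"
      using j k Mt by (simp add: adj_mat_def scalar_prod_def Mt_def atLeast0LessThan)
    moreover have "(det Mt \<cdot>\<^sub>m 1\<^sub>m n) $$ (j,k) = (if j = k then detn n M else 0)"
      using j k by (simp add: detn_det Mt_def)
    ultimately show ?thesis by simp
  qed
  have "detn n M * g j = (\<Sum>k<n. (if j = k then detn n M else 0) * g k)"
  proof -
    have "(\<Sum>k<n. (if j = k then detn n M else 0) * g k) = (\<Sum>k<n. if j = k then detn n M * g k else 0)"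
      by (rule sum.cong) auto
    then show ?thesis using j by simp
  qed
  also have "\<dots> = (\<Sum>k<n. (\<Sum>i<n. cofactor Mt i j * M i k) * g k)"
    by (rule sum.cong) (auto simp: ent)
  also have "\<dots> = (\<Sum>k<n. \<Sum>i<n. cofactor Mt i j * M i k * g k)"
    by (simp add: sum_distrib_right)
  also have "\<dots> = (\<Sum>i<n. \<Sum>k<n. cofactor Mt i j * M i k * g k)"
    by (rule sum.swap)
  also have "\<dots> = (\<Sum>i<n. cofactor Mt i j * (\<Sum>k<n. M i k * g k))"
    by (simp add: sum_distrib_left mult.assoc)
  also have "\<dots> \<in> I"
  proof (rule isId_sum[OF I])
    fix i assume "i \<in> {..<n}"
    then show "cofactor Mt i j * (\<Sum>k<n. M i k * g k) \<in> I"
      using rel I cofactor_in[OF C e] unfolding Mt_def isId_def by auto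
  qed
  finally show ?thesis .
qed

lemma detn_diag: "detn n (\<lambda>i j. if j = i then a i else 0) = (\<Prod>i<n. a i)"
proof -
  have z: "of_int (sign p) * (\<Prod>i<n. if p i = i then a i else 0) = 0"
    if p: "p \<in> {p. p permutes {..<n}} - {id}" for p
  proof -
    have pp: "p permutes {..<n}" "p \<noteq> id" using p by auto
    have "\<exists>i<n. p i \<noteq> i"
    proof (rule ccontr)
      assume "\<not> ?thesis"
      then have "p x = x" for x using pp(1) unfolding permutes_def by (cases "x < n") auto
      then show False using pp(2) by auto
    qed
    then have "(\<Prod>i<n. if p i = i then a i else 0) = 0" by (intro prod_zero) auto
    then show ?thesis by simp
  qed
  have "detn n (\<lambda>i j. if j = i then a i else 0)
     = of_int (sign (id::nat\<Rightarrow>nat)) * (\<Prod>i<n. if id i = i then a i else 0)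
       + (\<Sum>p \<in> {p. p permutes {..<n}} - {id}. of_int (sign p) * (\<Prod>i<n. if p i = i then a i else 0))"
    unfolding detn_def by (subst sum.remove[of _ id]) (auto simp: permutes_id finite_permutations)
  also have "\<dots> = (\<Prod>i<n. a i)" using z by simp
  finally show ?thesis .
qed



theorem mainTheorem3:
  fixes s r :: nat and ns nu :: "nat list" and G :: "('k::field) mpoly set"
    and J :: "'k mpoly set"
  assumes "length ns = s"
    and "finite G"
    and "G \<subseteq> Sring s ns r"
    and "\<forall>g \<in> G. \<exists>mu t. homog s ns r mu t g"
    and "J = gen_ideal (Sring s ns r) G"
    and "length nu = s"
    and "H0B_piece_zero s ns r J nu"
  shows "frakA s ns r J = ann_piece s ns r J nu
    \<and> (\<exists>n::nat. ideal_pow (Aring r) (frakA s ns r J) n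
          \<subseteq> fitt0 (Aring r) (Spiece s ns r nu) (J \<inter> Spiece s ns r nu)
        \<and> fitt0 (Aring r) (Spiece s ns r nu) (J \<inter> Spiece s ns r nu) \<subseteq> frakA s ns r J)"
proof -
  note J = assms(5) and nu = assms(6)
  let ?S = "Sring s ns r" and ?A = "Aring r" and ?P = "Spiece s ns r nu"
  let ?N = "J \<inter> ?P"
  have p1: "frakA s ns r J = ann_piece s ns r J nu" by (rule part1[OF J nu assms(7)])
  have IJ: "isId ?S J" unfolding J by (rule gen_ideal_isId[OF subr_S])
  have AS: "?A \<subseteq> ?S" by (rule A_sub_S)
  have IJA: "isId ?A J" using IJ AS unfolding isId_def by (meson subsetD)
  define gs where "gs = (SOME gs. generates ?A ?P ?N gs)"
  have hgs: "generates ?A ?P ?N gs" unfolding gs_def by (rule someI_ex[OF gen_exists[OF J nu]])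
  define n where "n = length gs"
  have fitt: "fitt0 ?A ?P ?N = gen_ideal ?A {detn n (\<lambda>i j. rows i j) | rows. \<forall>i<n. rows i \<in> relations ?A ?N gs}"
    unfolding fitt0_def fitt0_wrt_def gs_def[symmetric] n_def by (rule refl)
  have gsP: "set gs \<subseteq> ?P" using hgs unfolding generates_def by blast
  have A0: "0 \<in> ?A" and Aadd: "\<And>x y. x \<in> ?A \<Longrightarrow> y \<in> ?A \<Longrightarrow> x + y \<in> ?A"
    and Amul: "\<And>x y. x \<in> ?A \<Longrightarrow> y \<in> ?A \<Longrightarrow> x * y \<in> ?A"
    using subr_A[of r] unfolding subr_def by auto
  have J0: "0 \<in> J" and Jadd: "\<And>x y. x \<in> J \<Longrightarrow> y \<in> J \<Longrightarrow> x + y \<in> J"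
    and Jmul: "\<And>c x. c \<in> ?S \<Longrightarrow> x \<in> J \<Longrightarrow> c * x \<in> J"
    using IJ unfolding isId_def by auto
  have isAnn: "isId ?A (ann_piece s ns r J nu)"
    unfolding isId_def
  proof (intro conjI ballI)
    show "0 \<in> ann_piece s ns r J nu" unfolding ann_piece_def using A0 J0 by simp
  next
    fix x y :: "'k mpoly" assume "x \<in> ann_piece s ns r J nu" "y \<in> ann_piece s ns r J nu"
    then show "x + y \<in> ann_piece s ns r J nu"
      unfolding ann_piece_def using Aadd Jadd by (auto simp: distrib_right)
  next
    fix c x :: "'k mpoly" assume c: "c \<in> ?A" and x: "x \<in> ann_piece s ns r J nu"
    have "c * x * f \<in> J" if "f \<in> ?P" for f
    proof -
      have "c * (x * f) \<in> J" using Jmul[of c "x * f"] c AS x that unfolding ann_piece_def by blast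
      then show ?thesis by (simp add: mult.assoc)
    qed
    then show "c * x \<in> ann_piece s ns r J nu"
      using Amul c x unfolding ann_piece_def by blast
  qed
  have dets_ann: "detn n rows \<in> ann_piece s ns r J nu"
    if rows: "\<forall>i<n. rows i \<in> relations ?A ?N gs" for rows
  proof -
    have ent: "rows i j \<in> ?A" if "i < n" "j < n" for i j
      using rows that unfolding relations_def n_def by blast
    have dA: "detn n rows \<in> ?A" by (rule detn_in[OF subr_A ent])
    have kill: "detn n rows * gs ! j \<in> J" if j: "j < n" for j
    proof (rule det_kills[OF subr_A IJA ent _ j])
      fix i assume "i < n"
      then show "(\<Sum>k<n. rows i k * gs ! k) \<in> J" using rows unfolding relations_def n_def by blast
    qed
    have "detn n rows * f \<in> J" if f: "f \<in> ?P" for f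
    proof -
      obtain a where a: "\<forall>i<n. a i \<in> ?A" "f - (\<Sum>i<n. a i * gs ! i) \<in> ?N"
        using hgs f unfolding generates_def n_def by blast
      define d where "d = detn n rows"
      define \<sigma> where "\<sigma> = (\<Sum>i<n. a i * gs ! i)"
      have dS: "d \<in> ?S" using dA AS unfolding d_def by blast
      have e1: "d * f = d * (f - \<sigma>) + d * \<sigma>" by (simp add: right_diff_distrib)
      have e2: "d * \<sigma> = (\<Sum>i<n. a i * (d * gs ! i))"
        unfolding \<sigma>_def by (simp add: sum_distrib_left mult.left_commute)
      have m1: "d * (f - \<sigma>) \<in> J" using Jmul[OF dS] a(2) unfolding \<sigma>_def by blast
      have m2: "(\<Sum>i<n. a i * (d * gs ! i)) \<in> J"
      proof (rule isId_sum[OF IJ])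
        fix i assume "i \<in> {..<n}"
        then show "a i * (d * gs ! i) \<in> J" using Jmul[of "a i" "d * gs ! i"] a(1) AS kill unfolding d_def by blast
      qed
      have "d * f \<in> J" unfolding e1 e2 using Jadd m1 m2 by blast
      then have "detn n rows * f \<in> J" unfolding d_def .
      then show ?thesis .
    qed
    then show ?thesis using dA unfolding ann_piece_def by blast
  qed
  have sub2: "fitt0 ?A ?P ?N \<subseteq> frakA s ns r J"
    unfolding fitt p1 by (rule gen_ideal_least[OF isAnn]) (use dets_ann in blast)
  have sub1: "ideal_pow ?A (frakA s ns r J) n \<subseteq> fitt0 ?A ?P ?N"
    unfolding ideal_pow_def fitt
  proof (rule gen_ideal_least[OF gen_ideal_isId[OF subr_A]], safe)
    fix a :: "nat \<Rightarrow> 'k mpoly" assume a: "\<forall>i<n. a i \<in> frakA s ns r J"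
    define rows where "rows i j = (if j = i then a i else 0)" for i j
    have "\<forall>i<n. rows i \<in> relations ?A ?N gs"
    proof (intro allI impI)
      fix i assume i: "i < n"
      have afr: "a i \<in> frakA s ns r J" using a i by blast
      have aA: "a i \<in> ?A" using afr unfolding frakA_def by blast
      have aann: "a i \<in> ann_piece s ns r J nu" using afr unfolding p1 .
      have gi: "gs ! i \<in> ?P" using gsP nth_mem[of i gs] i unfolding n_def by blast
      have "(\<Sum>k<n. rows i k * gs ! k) = (\<Sum>k<n. if k = i then a i * gs ! k else 0)"
        unfolding rows_def by (rule sum.cong[OF refl]) simp
      also have "\<dots> = a i * gs ! i" using i by simp
      finally have sum: "(\<Sum>k<n. rows i k * gs ! k) = a i * gs ! i" .
      have "a i * gs ! i \<in> J" using aann gi unfolding ann_piece_def by blast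
      then have "a i * gs ! i \<in> ?N" using A_times_Spiece[OF aA gi] by blast
      then have r3: "(\<Sum>k<n. rows i k * gs ! k) \<in> ?N" unfolding sum .
      have r1: "\<forall>j<n. rows i j \<in> ?A" using aA A0 unfolding rows_def by auto
      have r2: "\<forall>j\<ge>n. rows i j = 0" using i unfolding rows_def by auto
      show "rows i \<in> relations ?A ?N gs"
        unfolding relations_def n_def[symmetric] by (intro CollectI conjI r1 r2 r3)
    qed
    then have dm: "detn n rows \<in> {detn n (\<lambda>i j. rows i j) | rows. \<forall>i<n. rows i \<in> relations ?A ?N gs}"
      by (intro CollectI exI[of _ rows]) simp
    have dprod: "detn n rows = (\<Prod>i<n. a i)" unfolding rows_def by (rule detn_diag)
    show "(\<Prod>i<n. a i) \<in> gen_ideal ?A {detn n (\<lambda>i j. rows i j) | rows. \<forall>i<n. rows i \<in> relations ?A ?N gs}"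
      using gen_ideal_gen[OF subr_A dm] unfolding dprod .
  qed
  show ?thesis using p1 sub1 sub2 by blast
qed


end
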